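(* Let $g,h>\tfrac12$ and let $\mathcal{D}=((d_1,t_1),\ldots,(d_M,t_M))$ be an ordered list of pairwise distinct seed labels, valid both for the parameters $(g,h)$ and $(h,g)$, which is mirror symmetric, i.e. $\{d_j: t_j=\mathrm{I}\}=\{d_j: t_j=\mathrm{II}\}$ as sets. Then for every $n\in\mathbb{Z}_{\ge0}$ and $-1<\eta<1$, $$P_{\mathcal{D},n}\big(-\eta;(g,h)\big)=(-1)^nP_{\mathcal{D},n}\big(\eta;(h,g)\big),\qquad \Xi_{\mathcal{D}}\big(-\eta;(g,h)\big)=\Xi_{\mathcal{D}}\big(\eta;(h,g)\big).$$
   Context: $[a]'$ denotes the greatest integer strictly less than $a$; $(a)_k=a(a+1)\cdots(a+k-1)$, $(a)_0=1$. For real $\alpha,\beta$, $m\in\mathbb{Z}_{\ge0}$, $P^{(\alpha,\beta)}_m(\eta)=\frac{1}{m!}\sum_{k=0}^m\frac{(-m)_k(m+\alpha+\beta+1)_k(\alpha+k+1)_{m-k}}{k!}\big(\frac{1-\eta}{2}\big)^k$. For parameters $(g,h)$, a seed label is a pair $(\mathrm{v},t)$, $t\in\{\mathrm{I},\mathrm{II}\}$, with $\mathrm{v}\in\{0,\ldots,[h-\frac12]'\}$ if $t=\mathrm{I}$ and $\mathrm{v}\in\{0,\ldots,[g-\frac12]'\}$ if $t=\mathrm{II}$. For $-1<\eta<1$ let $\mu_{(\mathrm{v},\mathrm{I})}(\eta;(g,h))=\big(\frac{1+\eta}{2}\big)^{\frac12-h}P^{(g-\frac12,\frac12-h)}_{\mathrm{v}}(\eta)$,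 $\mu_{(\mathrm{v},\mathrm{II})}(\eta;(g,h))=\big(\frac{1-\eta}{2}\big)^{\frac12-g}P^{(\frac12-g,h-\frac12)}_{\mathrm{v}}(\eta)$, $P_n(\eta;(g,h))=P^{(g-\frac12,h-\frac12)}_n(\eta)$, and $\mathrm{W}[f_1,\ldots,f_r](\eta)=\det\big(\frac{d^{j-1}f_k}{d\eta^{j-1}}\big)_{1\le j,k\le r}$. For an ordered list $\mathcal{D}$ of seed labels with $M_{\mathrm{I}}$ of Type I and $M_{\mathrm{II}}$ of Type II, $\Xi_{\mathcal{D}}(\eta;(g,h))=\mathrm{W}[\mu_{(d_1,t_1)},\ldots,\mu_{(d_M,t_M)}](\eta)\big(\frac{1-\eta}{2}\big)^{(M_{\mathrm{I}}+g-\frac12)M_{\mathrm{II}}}\big(\frac{1+\eta}{2}\big)^{(M_{\mathrm{II}}+h-\frac12)M_{\mathrm{I}}}$ and $P_{\mathcal{D},n}(\eta;(g,h))=\mathrm{W}[\mu_{(d_1,t_1)},\ldots,\mu_{(d_M,t_M)},P_n](\eta)\big(\frac{1-\eta}{2}\big)^{(M_{\mathrm{I}}+g+\frac12)M_{\mathrm{II}}}\big(\frac{1+\eta}{2}\big)^{(M_{\mathrm{II}}+h+\frac12)M_{\mathrm{I}}}$, with all $\mu$'s and $P_n$ at parameters $(g,h)$; these are polynomials in $\eta$. *)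

theory Defs
  imports "HOL-Analysis.Analysis" "HOL-Combinatorics.Permutations"
begin

definition gint_less :: "real \<Rightarrow> int" where
  "gint_less a = \<lceil>a\<rceil> - 1"

definition jacobiP :: "real \<Rightarrow> real \<Rightarrow> nat \<Rightarrow> real \<Rightarrow> real" where
  "jacobiP \<alpha> \<beta> m \<eta> = (1 / fact m) *
     (\<Sum>k=0..m. pochhammer (- real m) k * pochhammer (real m + \<alpha> + \<beta> + 1) k
                 * pochhammer (\<alpha> + real k + 1) (m - k) / fact k * ((1 - \<eta>) / 2) ^ k)"

datatype seedtype = TI | TII

type_synonym seedlabel = "nat \<times> seedtype"

definition valid_seed :: "real \<Rightarrow> real \<Rightarrow> seedlabel \<Rightarrow> bool" where
  "valid_seed g h d = (case d of
      (v, TI) \<Rightarrow> int v \<le> gint_less (h - 1/2)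
    | (v, TII) \<Rightarrow> int v \<le> gint_less (g - 1/2))"

definition mu :: "seedlabel \<Rightarrow> real \<Rightarrow> real \<Rightarrow> real \<Rightarrow> real" where
  "mu d g h \<eta> = (case d of
      (v, TI) \<Rightarrow> ((1 + \<eta>) / 2) powr (1/2 - h) * jacobiP (g - 1/2) (1/2 - h) v \<eta>
    | (v, TII) \<Rightarrow> ((1 - \<eta>) / 2) powr (1/2 - g) * jacobiP (1/2 - g) (h - 1/2) v \<eta>)"

definition Pn :: "nat \<Rightarrow> real \<Rightarrow> real \<Rightarrow> real \<Rightarrow> real" where
  "Pn n g h \<eta> = jacobiP (g - 1/2) (h - 1/2) n \<eta>"

definition wronskian :: "(real \<Rightarrow> real) list \<Rightarrow> real \<Rightarrow> real" where
  "wronskian fs x = (\<Sum>p | p permutes {0..<length fs}.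
       of_int (sign p) * (\<Prod>j<length fs. (deriv ^^ j) (fs ! (p j)) x))"

definition MI :: "seedlabel list \<Rightarrow> nat" where
  "MI D = length (filter (\<lambda>d. snd d = TI) D)"

definition MII :: "seedlabel list \<Rightarrow> nat" where
  "MII D = length (filter (\<lambda>d. snd d = TII) D)"

definition Xi :: "seedlabel list \<Rightarrow> real \<Rightarrow> real \<Rightarrow> real \<Rightarrow> real" where
  "Xi D g h \<eta> = wronskian (map (\<lambda>d. mu d g h) D) \<eta>
     * ((1 - \<eta>) / 2) powr ((real (MI D) + g - 1/2) * real (MII D))
     * ((1 + \<eta>) / 2) powr ((real (MII D) + h - 1/2) * real (MI D))"

definition PD :: "seedlabel list \<Rightarrow> nat \<Rightarrow> real \<Rightarrow> real \<Rightarrow> real \<Rightarrow> real" where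
  "PD D n g h \<eta> = wronskian (map (\<lambda>d. mu d g h) D @ [Pn n g h]) \<eta>
     * ((1 - \<eta>) / 2) powr ((real (MI D) + g + 1/2) * real (MII D))
     * ((1 + \<eta>) / 2) powr ((real (MII D) + h + 1/2) * real (MI D))"

definition mirror_symmetric :: "seedlabel list \<Rightarrow> bool" where
  "mirror_symmetric D = ({v. (v, TI) \<in> set D} = {v. (v, TII) \<in> set D})"

end

theory Submission
  imports Defs "HOL-Computational_Algebra.Formal_Power_Series"
begin
lemma inner_id:
  assumes kn: "k \<le> n"
  shows "(\<Sum>s\<le>k. ((real n+\<alpha>) gchoose (n-s)) * ((real n+\<beta>) gchoose s) * real (n-s choose (k-s)))
     = ((real n+\<alpha>) gchoose (n-k)) * ((real n + \<alpha> + \<beta> + real k) gchoose k)"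
proof -
  have t: "((real n+\<alpha>) gchoose (n-s)) * real (n-s choose (k-s))
        = ((real n+\<alpha>) gchoose (n-k)) * ((\<alpha> + real k) gchoose (k-s))" if "s \<le> k" for s
  proof -
    have "real (n-s choose (k-s)) = real (n-s choose (n-k))"
      proof -
      have "k - s \<le> n - s" using that kn by simp
      then have "n-s choose (k-s) = n-s choose ((n-s)-(k-s))" by (rule binomial_symmetric)
      also have "(n-s)-(k-s) = n-k" using that kn by simp
      finally show ?thesis by simp
    qed
    also have "\<dots> = (real (n-s) gchoose (n-k))" by (simp add: binomial_gbinomial)
    finally have e: "real (n-s choose (k-s)) = (real (n-s) gchoose (n-k))" .
    have "((real n+\<alpha>) gchoose (n-s)) * (real (n-s) gchoose (n-k))
       = ((real n+\<alpha>) gchoose (n-k)) * ((real n + \<alpha> - real (n-k)) gchoose ((n-s) - (n-k)))"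
      using that kn by (intro gbinomial_trinomial_revision) auto
    also have "real n + \<alpha> - real (n-k) = \<alpha> + real k" using kn by (simp add: of_nat_diff)
    also have "(n-s) - (n-k) = k - s" using that kn by simp
    finally show ?thesis using e by simp
  qed
  have "(\<Sum>s\<le>k. ((real n+\<alpha>) gchoose (n-s)) * ((real n+\<beta>) gchoose s) * real (n-s choose (k-s)))
     = (\<Sum>s\<le>k. ((real n+\<alpha>) gchoose (n-k)) * (((real n+\<beta>) gchoose s) * ((\<alpha> + real k) gchoose (k-s))))"
  proof (rule sum.cong[OF refl])
    fix s assume "s \<in> {..k}" then have sk: "s \<le> k" by simp
    have "((real n+\<alpha>) gchoose (n-s)) * ((real n+\<beta>) gchoose s) * real (n-s choose (k-s))
      = ((real n+\<beta>) gchoose s) * (((real n+\<alpha>) gchoose (n-s)) * real (n-s choose (k-s)))" by (simp add: mult_ac)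
    also have "\<dots> = ((real n+\<beta>) gchoose s) * (((real n+\<alpha>) gchoose (n-k)) * ((\<alpha> + real k) gchoose (k-s)))"
      by (simp only: t[OF sk])
    also have "\<dots> = ((real n+\<alpha>) gchoose (n-k)) * (((real n+\<beta>) gchoose s) * ((\<alpha> + real k) gchoose (k-s)))"
      by (simp add: mult_ac)
    finally show "((real n+\<alpha>) gchoose (n-s)) * ((real n+\<beta>) gchoose s) * real (n-s choose (k-s))
      = ((real n+\<alpha>) gchoose (n-k)) * (((real n+\<beta>) gchoose s) * ((\<alpha> + real k) gchoose (k-s)))" .
  qed
  also have "\<dots> = ((real n+\<alpha>) gchoose (n-k)) * (\<Sum>s=0..k. ((real n+\<beta>) gchoose s) * ((\<alpha> + real k) gchoose (k-s)))"
    by (simp add: sum_distrib_left atLeast0AtMost)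
  also have "(\<Sum>s=0..k. ((real n+\<beta>) gchoose s) * ((\<alpha> + real k) gchoose (k-s))) = (real n + \<beta> + (\<alpha> + real k)) gchoose k"
    by (rule gbinomial_Vandermonde)
  finally show ?thesis by (simp add: algebra_simps)
qed

lemma poch_nat: "k \<le> n \<Longrightarrow> pochhammer (real n - real k + 1) k = fact n / fact (n - k)"
proof -
  assume kn: "k \<le> n"
  have "real (n choose k) = pochhammer (real n - real k + 1) k / fact k"
    by (simp add: binomial_gbinomial gbinomial_pochhammer')
  moreover have "real (n choose k) = fact n / (fact k * fact (n - k))"
    using kn by (simp add: binomial_fact)
  ultimately show ?thesis by (simp add: field_simps)
qed

lemma coef_id:
  assumes kn: "k \<le> n"
  shows "pochhammer (- real n) k * pochhammer (real n + \<alpha> + \<beta> + 1) k * pochhammer (\<alpha> + real k + 1) (n - k) / fact k / fact n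
    = (-1)^k * ((real n + \<alpha>) gchoose (n-k)) * ((real n + \<alpha> + \<beta> + real k) gchoose k)"
proof -
  have a: "pochhammer (- real n) k = (-1)^k * (fact n / fact (n - k))"
    by (simp add: pochhammer_minus poch_nat kn)
  have b: "(real n + \<alpha>) gchoose (n-k) = pochhammer (\<alpha> + real k + 1) (n - k) / fact (n - k)"
    using kn by (simp add: gbinomial_pochhammer' of_nat_diff algebra_simps)
  have c: "(real n + \<alpha> + \<beta> + real k) gchoose k = pochhammer (real n + \<alpha> + \<beta> + 1) k / fact k"
    by (simp add: gbinomial_pochhammer' algebra_simps)
  show ?thesis unfolding a b c by (simp add: field_simps)
qed


definition JS :: "real \<Rightarrow> real \<Rightarrow> nat \<Rightarrow> real \<Rightarrow> real" where
  "JS \<alpha> \<beta> n x = (\<Sum>s\<le>n. ((real n+\<alpha>) gchoose (n-s)) * ((real n+\<beta>) gchoose s) * ((x-1)/2)^s * ((x+1)/2)^(n-s))"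

lemma jacobiP_JS: "jacobiP \<alpha> \<beta> n x = JS \<alpha> \<beta> n x"
proof -
  define w where "w = (1 - x) / 2"
  define A where "A s = ((real n+\<alpha>) gchoose (n-s)) * ((real n+\<beta>) gchoose s)" for s
  define f where "f s i = A s * real (n-s choose i) * (-w)^(s+i)" for s i
  have "JS \<alpha> \<beta> n x = (\<Sum>s\<le>n. A s * (-w)^s * ((-w)+1)^(n-s))"
  proof -
    have e: "(x-1)/2 = -w" "(x+1)/2 = -w+1" by (simp_all add: w_def field_simps)
    show ?thesis unfolding JS_def A_def e by (simp add: mult_ac)
  qed
  also have "\<dots> = (\<Sum>s\<le>n. \<Sum>i\<le>n-s. f s i)"
    unfolding f_def binomial_ring by (simp add: sum_distrib_left power_add mult_ac)
  also have "\<dots> = (\<Sum>(s,i)\<in>Sigma {..n} (\<lambda>s. {..n-s}). f s i)"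
    by (rule sum.Sigma) auto
  also have "Sigma {..n} (\<lambda>s. {..n-s}) = {(s,i). s+i \<le> n}" by auto
  also have "(\<Sum>(s,i)\<in>{(s,i). s+i \<le> n}. f s i) = (\<Sum>k\<le>n. \<Sum>s\<le>k. f s (k-s))"
    by (rule sum.triangle_reindex_eq)
  also have "\<dots> = (\<Sum>k\<le>n. w^k * (pochhammer (- real n) k * pochhammer (real n + \<alpha> + \<beta> + 1) k * pochhammer (\<alpha> + real k + 1) (n - k) / fact k / fact n))"
  proof (rule sum.cong[OF refl])
    fix k assume "k \<in> {..n}" then have kn: "k \<le> n" by simp
    have "(\<Sum>s\<le>k. f s (k-s)) = (-w)^k * (\<Sum>s\<le>k. A s * real (n-s choose (k-s)))"
      unfolding f_def by (simp add: sum_distrib_left mult_ac)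
    also have "\<dots> = (-w)^k * (((real n+\<alpha>) gchoose (n-k)) * ((real n + \<alpha> + \<beta> + real k) gchoose k))"
      unfolding A_def using inner_id[OF kn] by simp
    also have "\<dots> = w^k * ((-1)^k * ((real n+\<alpha>) gchoose (n-k)) * ((real n + \<alpha> + \<beta> + real k) gchoose k))"
      by (subst power_minus) (simp only: mult_ac)
    also have "\<dots> = w^k * (pochhammer (- real n) k * pochhammer (real n + \<alpha> + \<beta> + 1) k * pochhammer (\<alpha> + real k + 1) (n - k) / fact k / fact n)"
      by (simp only: coef_id[OF kn])
    finally show "(\<Sum>s\<le>k. f s (k-s)) = w^k * (pochhammer (- real n) k * pochhammer (real n + \<alpha> + \<beta> + 1) k * pochhammer (\<alpha> + real k + 1) (n - k) / fact k / fact n)" .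
  qed
  also have "\<dots> = jacobiP \<alpha> \<beta> n x"
    unfolding jacobiP_def w_def sum_distrib_left atLeast0AtMost
    by (rule sum.cong[OF refl]) (simp add: field_simps)
  finally show ?thesis by simp
qed

lemma JS_reflect: "JS \<beta> \<alpha> n (-x) = (-1)^n * JS \<alpha> \<beta> n x"
proof -
  have "JS \<beta> \<alpha> n (-x) = (\<Sum>s\<le>n. ((real n+\<beta>) gchoose (n-(n-s))) * ((real n+\<alpha>) gchoose (n-s)) * ((-x-1)/2)^(n-s) * ((-x+1)/2)^(n-(n-s)))"
    unfolding JS_def by (rule sum.reindex_bij_witness[where i="\<lambda>s. n-s" and j="\<lambda>s. n-s"]) auto
  also have "\<dots> = (\<Sum>s\<le>n. (-1)^n * (((real n+\<alpha>) gchoose (n-s)) * ((real n+\<beta>) gchoose s) * ((x-1)/2)^s * ((x+1)/2)^(n-s)))"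
  proof (rule sum.cong[OF refl])
    fix s assume "s \<in> {..n}" then have sn: "s \<le> n" by simp
    have "(-x-1)/2 = (-1)*((x+1)/2)" by (simp add: field_simps)
    then have e1: "((-x-1)/2)^(n-s) = (-1)^(n-s) * ((x+1)/2)^(n-s)"
      by (simp only: power_mult_distrib)
    have "(-x+1)/2 = (-1)*((x-1)/2)" by (simp add: field_simps)
    then have e2: "((-x+1)/2)^s = (-1)^s * ((x-1)/2)^s"
      by (simp only: power_mult_distrib)
    have e3: "(-1::real)^(n-s) * (-1)^s = (-1)^n" using sn by (simp add: power_add[symmetric])
    show "((real n+\<beta>) gchoose (n-(n-s))) * ((real n+\<alpha>) gchoose (n-s)) * ((-x-1)/2)^(n-s) * ((-x+1)/2)^(n-(n-s))
      = (-1)^n * (((real n+\<alpha>) gchoose (n-s)) * ((real n+\<beta>) gchoose s) * ((x-1)/2)^s * ((x+1)/2)^(n-s))"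
      unfolding e1 e2 e3[symmetric] diff_diff_cancel[OF sn] by (simp only: mult_ac)
  qed
  finally show ?thesis unfolding JS_def by (simp add: sum_distrib_left)
qed

lemma jacobiP_reflect: "jacobiP \<alpha> \<beta> n (-x) = (-1)^n * jacobiP \<beta> \<alpha> n x"
  by (simp add: jacobiP_JS JS_reflect)

fun ef :: "(real \<times> real \<times> real) list \<Rightarrow> real \<Rightarrow> real" where
  "ef [] x = 0"
| "ef ((c,a,b)#L) x = c * ((1+x)/2) powr a * ((1-x)/2) powr b + ef L x"

fun dl :: "(real \<times> real \<times> real) list \<Rightarrow> (real \<times> real \<times> real) list" where
  "dl [] = []"
| "dl ((c,a,b)#L) = (c*a/2, a-1, b) # (-(c*b/2), a, b-1) # dl L"

lemma ef_deriv: "-1 < x \<Longrightarrow> x < 1 \<Longrightarrow> (ef L has_real_derivative ef (dl L) x) (at x)"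
proof (induction L)
  case Nil
  then show ?case by simp
next
  case (Cons t L)
  obtain c a b where t: "t = (c,a,b)" by (cases t) auto
  have u: "(1+x)/2 > 0" and w: "(1-x)/2 > 0" using Cons.prems by auto
  have "((\<lambda>x. c * ((1+x)/2) powr a * ((1-x)/2) powr b) has_real_derivative
     c * (a * ((1+x)/2) powr (a-1) * (1/2)) * ((1-x)/2) powr b + c * ((1+x)/2) powr a * (b * ((1-x)/2) powr (b-1) * (-1/2))) (at x)"
    using u w by (auto intro!: derivative_eq_intros simp: algebra_simps)
  from DERIV_add[OF this Cons.IH[OF Cons.prems]]
  have d: "((\<lambda>x. c * ((1+x)/2) powr a * ((1-x)/2) powr b + ef L x) has_real_derivative
     c * (a * ((1+x)/2) powr (a-1) * (1/2)) * ((1-x)/2) powr b + c * ((1+x)/2) powr a * (b * ((1-x)/2) powr (b-1) * (-1/2)) + ef (dl L) x) (at x)" .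
  have eq1: "ef ((c,a,b)#L) = (\<lambda>x. c * ((1+x)/2) powr a * ((1-x)/2) powr b + ef L x)" by (rule ext) simp
  have eq2: "ef (dl ((c,a,b)#L)) x = c * (a * ((1+x)/2) powr (a-1) * (1/2)) * ((1-x)/2) powr b + c * ((1+x)/2) powr a * (b * ((1-x)/2) powr (b-1) * (-1/2)) + ef (dl L) x"
    by (simp add: algebra_simps)
  show ?case unfolding t eq1 eq2 by (rule d)
qed


abbreviation "Iv \<equiv> {-1<..<(1::real)}"

lemma ef_higher:
  assumes "\<forall>x\<in>Iv. f x = ef L x"
  shows "\<exists>L'. \<forall>x\<in>Iv. (deriv^^j) f x = ef L' x"
proof (induction j)
  case 0
  then show ?case using assms by auto
next
  case (Suc j)
  then obtain L' where L': "\<forall>x\<in>Iv. (deriv^^j) f x = ef L' x" by blast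
  have "\<forall>x\<in>Iv. (deriv^^Suc j) f x = ef (dl L') x"
  proof
    fix x :: real assume x: "x \<in> Iv"
    have "((deriv^^j) f has_real_derivative ef (dl L') x) (at x)"
      by (rule has_field_derivative_transform_within_open[OF ef_deriv[of x L'] _ x])
         (use x L' in auto)
    then show "(deriv^^Suc j) f x = ef (dl L') x" by (simp add: DERIV_imp_deriv)
  qed
  then show ?case by blast
qed

lemma higher_has_deriv:
  assumes "\<forall>x\<in>Iv. f x = ef L x" and x: "x \<in> Iv"
  shows "((deriv^^j) f has_real_derivative (deriv^^(Suc j)) f x) (at x)"
proof -
  obtain L' where L': "\<forall>x\<in>Iv. (deriv^^j) f x = ef L' x" using ef_higher[OF assms(1)] by blast
  have "((deriv^^j) f has_real_derivative ef (dl L') x) (at x)"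
    by (rule has_field_derivative_transform_within_open[OF ef_deriv[of x L'] _ x])
       (use x L' in auto)
  then show ?thesis by (simp add: DERIV_imp_deriv)
qed

lemma reflect_deriv:
  assumes G: "\<forall>x\<in>Iv. G x = ef L x" and F: "\<forall>x\<in>Iv. F x = c * G (-x)"
  shows "\<forall>x\<in>Iv. (deriv^^j) F x = c * (-1)^j * (deriv^^j) G (-x)"
proof (induction j)
  case 0
  then show ?case using F by auto
next
  case (Suc j)
  show ?case
  proof
    fix x :: real assume x: "x \<in> Iv"
    have mx: "-x \<in> Iv" using x by auto
    have d1: "((deriv^^j) G has_real_derivative (deriv^^(Suc j)) G (-x)) (at (-x))"
      by (rule higher_has_deriv[OF G mx])
    have "((\<lambda>y. c * (-1)^j * (deriv^^j) G (-y)) has_real_derivative c * (-1)^j * ((deriv^^(Suc j)) G (-x) * (-1))) (at x)"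
      by (rule DERIV_cmult, rule DERIV_chain2[where g=uminus, OF d1]) (auto intro!: derivative_eq_intros)
    then have "((deriv^^j) F has_real_derivative c * (-1)^j * ((deriv^^(Suc j)) G (-x) * (-1))) (at x)"
      by (rule has_field_derivative_transform_within_open[OF _ _ x]) (use Suc in auto)
    then have "(deriv^^Suc j) F x = c * (-1)^j * ((deriv^^(Suc j)) G (-x) * (-1))"
      by (simp add: DERIV_imp_deriv)
    then show "(deriv^^Suc j) F x = c * (-1)^(Suc j) * (deriv^^(Suc j)) G (-x)" by simp
  qed
qed

lemma wronskian_reflect:
  assumes len: "length fs = M" "length gs = M"
    and sp: "\<sigma> permutes {0..<M}" and inv: "\<forall>i<M. \<sigma> (\<sigma> i) = i"
    and rel: "\<forall>i<M. \<forall>j<M. (deriv^^j) (fs!i) \<eta> = c i * (-1)^j * (deriv^^j) (gs!(\<sigma> i)) \<eta>'"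
  shows "wronskian fs \<eta> = (\<Prod>i<M. c i) * (\<Prod>j<M. (-1::real)^j) * of_int (sign \<sigma>) * wronskian gs \<eta>'"
proof -
  define P where "P = {p. p permutes {0..<M}}"
  define T where "T q = (\<Prod>j<M. (deriv^^j) (gs!(q j)) \<eta>')" for q :: "nat \<Rightarrow> nat"
  have ss: "\<sigma> \<circ> \<sigma> = id"
  proof
    fix x show "(\<sigma> \<circ> \<sigma>) x = id x"
      using inv permutes_not_in[OF sp, of x] by (cases "x < M") auto
  qed
  have perm_s: "permutation \<sigma>" using sp by (auto simp: permutation_permutes)
  have "wronskian fs \<eta> = (\<Sum>p\<in>P. of_int (sign p) * ((\<Prod>i<M. c i) * (\<Prod>j<M. (-1::real)^j) * T (\<sigma> \<circ> p)))"
    unfolding wronskian_def len(1) P_def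
  proof (rule sum.cong[OF refl])
    fix p assume "p \<in> {p. p permutes {0..<M}}"
    then have p: "p permutes {0..<M}" by simp
    then have p': "p permutes {..<M}" by (simp add: atLeast0LessThan)
    have pl: "j < M \<Longrightarrow> p j < M" for j using permutes_in_image[OF p, of j] by simp
    have "(\<Prod>j<M. (deriv^^j) (fs!(p j)) \<eta>) = (\<Prod>j<M. c (p j) * ((-1)^j * (deriv^^j) (gs!(\<sigma> (p j))) \<eta>'))"
      by (rule prod.cong[OF refl]) (use rel pl in auto)
    also have "\<dots> = (\<Prod>j<M. c (p j)) * ((\<Prod>j<M. (-1::real)^j) * T (\<sigma> \<circ> p))"
      by (simp add: prod.distrib T_def)
    also have "(\<Prod>j<M. c (p j)) = (\<Prod>i<M. c i)"
      using prod.permute[OF p', of c] by (simp add: comp_def)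
    finally show "of_int (sign p) * (\<Prod>j<M. (deriv^^j) (fs!(p j)) \<eta>) =
        of_int (sign p) * ((\<Prod>i<M. c i) * (\<Prod>j<M. (-1::real)^j) * T (\<sigma> \<circ> p))" by (simp add: mult_ac comp_def)
  qed
  also have "\<dots> = (\<Prod>i<M. c i) * (\<Prod>j<M. (-1::real)^j) * (\<Sum>p\<in>P. of_int (sign p) * T (\<sigma> \<circ> p))"
    by (simp add: sum_distrib_left mult_ac)
  also have "(\<Sum>p\<in>P. of_int (sign p) * T (\<sigma> \<circ> p)) = (\<Sum>q\<in>P. of_int (sign (\<sigma> \<circ> q)) * T q)"
  proof (rule sum.reindex_bij_witness[where i="\<lambda>q. \<sigma> \<circ> q" and j="\<lambda>p. \<sigma> \<circ> p"])
    fix q assume "q \<in> P" then show "\<sigma> \<circ> (\<sigma> \<circ> q) = q" by (simp only: o_assoc ss id_o)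
  next
    fix q assume "q \<in> P" then show "\<sigma> \<circ> q \<in> P" unfolding P_def using sp by (auto intro: permutes_compose)
  next
    fix p assume "p \<in> P" then show "\<sigma> \<circ> (\<sigma> \<circ> p) = p" by (simp only: o_assoc ss id_o)
  next
    fix p assume "p \<in> P" then show "\<sigma> \<circ> p \<in> P" unfolding P_def using sp by (auto intro: permutes_compose)
  next
    fix p assume "p \<in> P" then show "of_int (sign (\<sigma> \<circ> (\<sigma> \<circ> p))) * T (\<sigma> \<circ> p) = of_int (sign p) * T (\<sigma> \<circ> p)"
      by (simp only: o_assoc ss id_o)
  qed
  also have "\<dots> = of_int (sign \<sigma>) * (\<Sum>q\<in>P. of_int (sign q) * T q)"
    unfolding sum_distrib_left
  proof (rule sum.cong[OF refl])
    fix q assume "q \<in> P"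
    then have "permutation q" unfolding P_def by (auto simp: permutation_permutes)
    then show "of_int (sign (\<sigma> \<circ> q)) * T q = of_int (sign \<sigma>) * (of_int (sign q) * T q)"
      by (simp add: sign_compose[OF perm_s])
  qed
  also have "(\<Sum>q\<in>P. of_int (sign q) * T q) = wronskian gs \<eta>'"
    unfolding wronskian_def len(2) P_def T_def by simp
  finally show ?thesis by (simp add: mult_ac)
qed

lemma invol_sign:
  assumes "finite S" "\<sigma> permutes S" "\<forall>x\<in>S. \<sigma> (\<sigma> x) = x \<and> \<sigma> x \<noteq> x"
    "\<forall>x\<in>S. c (\<sigma> x) = c x \<and> c x * c x = (1::real)"
  shows "even (card S) \<and> sign \<sigma> = (-1)^(card S div 2) \<and> (\<Prod>x\<in>S. c x) = 1"
  using assms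
proof (induction "card S" arbitrary: S \<sigma> rule: less_induct)
  case less
  show ?case
  proof (cases "S = {}")
    case True
    then show ?thesis using less.prems by simp
  next
    case False
    then obtain a where a: "a \<in> S" by blast
    define b where "b = \<sigma> a"
    have b: "b \<in> S" unfolding b_def using permutes_in_image[OF less.prems(2)] a by simp
    have ab: "a \<noteq> b" "\<sigma> b = a" using less.prems(3) a by (auto simp: b_def)
    define S' where "S' = S - {a,b}"
    define \<tau> where "\<tau> = Transposition.transpose a b \<circ> \<sigma>"
    have tS: "\<tau> permutes S" unfolding \<tau>_def
      by (rule permutes_compose[OF less.prems(2) permutes_swap_id[OF a b]])
    have tab: "\<tau> a = a" "\<tau> b = b" using ab by (auto simp: \<tau>_def b_def)
    have tS': "\<tau> permutes S'" unfolding S'_def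
      by (rule permutes_superset[OF tS]) (use tab in auto)
    have sx: "\<sigma> x \<noteq> a \<and> \<sigma> x \<noteq> b" if "x \<in> S'" for x
    proof -
      have x: "x \<in> S" "x \<noteq> a" "x \<noteq> b" using that by (auto simp: S'_def)
      show ?thesis using x less.prems(3) ab(2) b_def by metis
    qed
    have tx: "\<tau> x = \<sigma> x" if "x \<in> S'" for x using sx[OF that] by (simp add: \<tau>_def)
    have "card {a,b} \<le> card S" by (rule card_mono) (use less.prems(1) a b in auto)
    then have c2: "2 \<le> card S" using ab(1) by simp
    have cardS: "card S = card S' + 2"
      using less.prems(1) a b ab(1) c2 unfolding S'_def by (simp add: card_Diff_subset)
    have fin': "finite S'" using less.prems(1) by (simp add: S'_def)
    have inS': "\<sigma> x \<in> S'" if "x \<in> S'" for x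
      using sx[OF that] that permutes_in_image[OF less.prems(2), of x] by (auto simp: S'_def)
    have h3: "\<forall>x\<in>S'. \<tau> (\<tau> x) = x \<and> \<tau> x \<noteq> x"
      using less.prems(3) tx inS' by (auto simp: S'_def)
    have h4: "\<forall>x\<in>S'. c (\<tau> x) = c x \<and> c x * c x = 1"
      using less.prems(4) tx by (auto simp: S'_def)
    have IH: "even (card S') \<and> sign \<tau> = (-1)^(card S' div 2) \<and> (\<Prod>x\<in>S'. c x) = 1"
      by (rule less.hyps[OF _ fin' tS' h3 h4]) (simp add: cardS)
    have perm_s: "permutation \<sigma>" using less.prems(1,2) by (auto simp: permutation_permutes)
    have perm_t: "permutation (Transposition.transpose a b)" by (simp add: permutation_swap_id)
    have "sign \<tau> = - sign \<sigma>" unfolding \<tau>_def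
      by (simp add: sign_compose[OF perm_t perm_s] sign_swap_id ab(1))
    then have sg: "sign \<sigma> = (-1)^(card S div 2)" using IH cardS by simp
    have "(\<Prod>x\<in>S. c x) = c a * c b * (\<Prod>x\<in>S'. c x)"
      using less.prems(1) a b ab(1) unfolding S'_def
      by (simp add: prod.remove[of S a] prod.remove[of "S - {a}" b] Diff_insert2[symmetric] mult_ac insert_commute)
    also have "\<dots> = 1" using IH less.prems(4) a b_def by simp
    finally show ?thesis using sg IH cardS by simp
  qed
qed


lemma ef_map: "ef (map (\<lambda>k. (q k, a, b + real k)) ks) x
   = (\<Sum>k\<leftarrow>ks. q k * ((1+x)/2) powr a * ((1-x)/2) powr (b + real k))"
  by (induction ks) auto

lemma jac_ef: "\<exists>L. \<forall>x\<in>Iv. ((1+x)/2) powr a * ((1-x)/2) powr b * jacobiP \<alpha> \<beta> m x = ef L x"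
proof -
  define q where "q k = (1 / fact m) * (pochhammer (- real m) k * pochhammer (real m + \<alpha> + \<beta> + 1) k
                 * pochhammer (\<alpha> + real k + 1) (m - k) / fact k)" for k
  define L where "L = map (\<lambda>k. (q k, a, b + real k)) [0..<Suc m]"
  have "((1+x)/2) powr a * ((1-x)/2) powr b * jacobiP \<alpha> \<beta> m x = ef L x" if x: "x \<in> Iv" for x
  proof -
    have w: "(1-x)/2 > 0" using x by auto
    have "ef L x = (\<Sum>k\<in>{0..<Suc m}. q k * ((1+x)/2) powr a * ((1-x)/2) powr (b + real k))"
      unfolding L_def ef_map sum_set_upt_conv_sum_list_nat[symmetric] by simp
    also have "\<dots> = (\<Sum>k\<in>{0..m}. ((1+x)/2) powr a * ((1-x)/2) powr b * (q k * ((1-x)/2)^k))"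
      unfolding atLeastLessThanSuc_atLeastAtMost
      by (rule sum.cong[OF refl]) (simp add: powr_add powr_realpow[OF w] mult_ac)
    also have "\<dots> = ((1+x)/2) powr a * ((1-x)/2) powr b * jacobiP \<alpha> \<beta> m x"
      unfolding jacobiP_def q_def sum_distrib_left
      by (rule sum.cong[OF refl]) (simp add: mult_ac)
    finally show ?thesis by simp
  qed
  then show ?thesis by blast
qed

lemma mu_ef: "\<exists>L. \<forall>x\<in>Iv. mu d g h x = ef L x"
proof -
  obtain v t where d: "d = (v,t)" by (cases d) auto
  show ?thesis
  proof (cases t)
    case TI
    obtain L where L: "\<forall>x\<in>Iv. ((1+x)/2) powr (1/2-h) * ((1-x)/2) powr 0 * jacobiP (g - 1/2) (1/2 - h) v x = ef L x"
      using jac_ef by blast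
    have "\<forall>x\<in>Iv. mu d g h x = ef L x"
    proof
      fix x :: real assume x: "x \<in> Iv"
      then have "(1-x)/2 \<noteq> 0" by auto
      then show "mu d g h x = ef L x" using L x by (simp add: mu_def d TI)
    qed
    then show ?thesis by blast
  next
    case TII
    obtain L where L: "\<forall>x\<in>Iv. ((1+x)/2) powr 0 * ((1-x)/2) powr (1/2-g) * jacobiP (1/2 - g) (h - 1/2) v x = ef L x"
      using jac_ef by blast
    have "\<forall>x\<in>Iv. mu d g h x = ef L x"
    proof
      fix x :: real assume x: "x \<in> Iv"
      then have "(1+x)/2 \<noteq> 0" by auto
      then show "mu d g h x = ef L x" using L x by (simp add: mu_def d TII)
    qed
    then show ?thesis by blast
  qed
qed

lemma Pn_ef: "\<exists>L. \<forall>x\<in>Iv. Pn n g h x = ef L x"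
proof -
  obtain L where L: "\<forall>x\<in>Iv. ((1+x)/2) powr 0 * ((1-x)/2) powr 0 * jacobiP (g - 1/2) (h - 1/2) n x = ef L x"
    using jac_ef by blast
  have "\<forall>x\<in>Iv. Pn n g h x = ef L x"
  proof
    fix x :: real assume x: "x \<in> Iv"
    then have "(1+x)/2 \<noteq> 0" "(1-x)/2 \<noteq> 0" by auto
    then show "Pn n g h x = ef L x" using L x by (simp add: Pn_def)
  qed
  then show ?thesis by blast
qed

fun sw :: "seedlabel \<Rightarrow> seedlabel" where
  "sw (v, TI) = (v, TII)"
| "sw (v, TII) = (v, TI)"

lemma sw_props: "sw (sw d) = d" "sw d \<noteq> d" "fst (sw d) = fst d"
  by (cases d rule: sw.cases; simp)+

lemma mu_reflect: "mu d h g x = (-1)^(fst d) * mu (sw d) g h (-x)"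
proof -
  obtain v t where d: "d = (v,t)" by (cases d) auto
  have pm: "(-1::real)^v * (-1)^v = 1" by (simp add: power_add[symmetric])
  show ?thesis
  proof (cases t)
    case TI
    show ?thesis using pm
      by (simp add: d TI mu_def jacobiP_reflect[of "1/2 - g" "h - 1/2" v x] mult_ac)
  next
    case TII
    show ?thesis using pm
      by (simp add: d TII mu_def jacobiP_reflect[of "g - 1/2" "1/2 - h" v x] mult_ac)
  qed
qed

lemma Pn_reflect: "Pn n h g x = (-1)^n * Pn n g h (-x)"
proof -
  have pm: "(-1::real)^n * (-1)^n = 1" by (simp add: power_add[symmetric])
  show ?thesis using pm by (simp add: Pn_def jacobiP_reflect[of "g - 1/2" "h - 1/2" n x] mult_ac)
qed

lemma mu_rel:
  assumes x: "x \<in> Iv"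
  shows "(deriv^^j) (mu d h g) x = (-1)^(fst d) * (-1)^j * (deriv^^j) (mu (sw d) g h) (-x)"
proof -
  obtain L where L: "\<forall>x\<in>Iv. mu (sw d) g h x = ef L x" using mu_ef by blast
  show ?thesis using reflect_deriv[OF L, of "mu d h g" "(-1)^(fst d)" j] mu_reflect x by blast
qed

lemma Pn_rel:
  assumes x: "x \<in> Iv"
  shows "(deriv^^j) (Pn n h g) x = (-1)^n * (-1)^j * (deriv^^j) (Pn n g h) (-x)"
proof -
  obtain L where L: "\<forall>x\<in>Iv. Pn n g h x = ef L x" using Pn_ef by blast
  show ?thesis using reflect_deriv[OF L, of "Pn n h g" "(-1)^n" j] Pn_reflect x by blast
qed

lemma prod_alt: "(\<Prod>j<2*k. (-1::real)^j) = (-1)^k"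
  by (induction k) (auto simp: power_add mult_2)

lemma prod_alt_even: "even M \<Longrightarrow> (\<Prod>j<M. (-1::real)^j) = (-1)^(M div 2)"
  using prod_alt[of "M div 2"] by auto

definition sig :: "seedlabel list \<Rightarrow> nat \<Rightarrow> nat" where
  "sig D i = (if i < length D then (THE j. j < length D \<and> D!j = sw (D!i)) else i)"

lemma sig_prop:
  assumes dist: "distinct D" and cl: "\<forall>d. sw d \<in> set D \<longleftrightarrow> d \<in> set D" and i: "i < length D"
  shows "sig D i < length D \<and> D!(sig D i) = sw (D!i)"
proof -
  have "sw (D!i) \<in> set D" using cl[rule_format, of "D!i"] i by simp
  then obtain j where j: "j < length D" "D!j = sw (D!i)" by (auto simp: in_set_conv_nth)
  have "(THE j. j < length D \<and> D!j = sw (D!i)) = j"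
  proof (rule the_equality)
    show "j < length D \<and> D!j = sw (D!i)" using j by simp
    fix k assume "k < length D \<and> D!k = sw (D!i)"
    then show "k = j" using j nth_eq_iff_index_eq[OF dist] by metis
  qed
  then show ?thesis using j i by (simp add: sig_def)
qed

lemma main_wron:
  assumes dist: "distinct D" and ms: "mirror_symmetric D" and x: "x \<in> Iv"
  shows "wronskian (map (\<lambda>d. mu d h g) D) x = wronskian (map (\<lambda>d. mu d g h) D) (-x)
    \<and> wronskian (map (\<lambda>d. mu d h g) D @ [Pn n h g]) x = (-1)^n * wronskian (map (\<lambda>d. mu d g h) D @ [Pn n g h]) (-x)"
proof -
  define M where "M = length D"
  have cl: "\<forall>d. sw d \<in> set D \<longleftrightarrow> d \<in> set D"
  proof
    fix d :: seedlabel
    obtain v t where d: "d = (v,t)" by (cases d) auto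
    show "sw d \<in> set D \<longleftrightarrow> d \<in> set D"
      using ms unfolding mirror_symmetric_def d by (cases t) (auto simp: set_eq_iff)
  qed
  note sp = sig_prop[OF dist cl]
  have ss: "\<forall>i<M. sig D (sig D i) = i"
  proof (intro allI impI)
    fix i assume i: "i < M"
    have "D!(sig D (sig D i)) = D!i" "sig D (sig D i) < M"
      using sp[of i] sp[of "sig D i"] i sw_props(1) by (auto simp: M_def)
    then show "sig D (sig D i) = i" using i dist by (simp add: M_def nth_eq_iff_index_eq)
  qed
  have sperm: "sig D permutes {0..<M}"
  proof (rule bij_imp_permutes)
    show "bij_betw (sig D) {0..<M} {0..<M}"
      by (rule bij_betw_byWitness[where f'="sig D"]) (use ss sp in \<open>auto simp: M_def\<close>)
    show "\<And>x. x \<notin> {0..<M} \<Longrightarrow> sig D x = x" by (simp add: sig_def M_def)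
  qed
  define c where "c i = (-1::real)^(fst (D!i))" for i
  have nfix: "\<forall>x\<in>{0..<M}. sig D (sig D x) = x \<and> sig D x \<noteq> x"
  proof
    fix i assume "i \<in> {0..<M}" then have i: "i < M" by simp
    have "sig D i \<noteq> i" using sp[of i] i sw_props(2)[of "D!i"] by (auto simp: M_def)
    then show "sig D (sig D i) = i \<and> sig D i \<noteq> i" using ss i by simp
  qed
  have cc: "\<forall>x\<in>{0..<M}. c (sig D x) = c x \<and> c x * c x = 1"
    using sp sw_props(3) by (auto simp: c_def M_def power_add[symmetric])
  from invol_sign[OF _ sperm nfix cc]
  have ev: "even M" and sg: "sign (sig D) = (-1)^(M div 2)" and pc: "(\<Prod>i\<in>{0..<M}. c i) = 1" by auto
  have pc': "(\<Prod>i<M. c i) = 1" using pc by (simp add: atLeast0LessThan)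
  have rel1: "\<forall>i<M. \<forall>j<M. (deriv^^j) ((map (\<lambda>d. mu d h g) D)!i) x
      = c i * (-1)^j * (deriv^^j) ((map (\<lambda>d. mu d g h) D)!(sig D i)) (-x)"
    using mu_rel[OF x] sp by (auto simp: M_def c_def)
  have W1: "wronskian (map (\<lambda>d. mu d h g) D) x = (\<Prod>i<M. c i) * (\<Prod>j<M. (-1::real)^j) * of_int (sign (sig D)) * wronskian (map (\<lambda>d. mu d g h) D) (-x)"
    by (rule wronskian_reflect[OF _ _ sperm ss rel1]) (simp_all add: M_def)
  have one: "(\<Prod>j<M. (-1::real)^j) * of_int (sign (sig D)) = 1"
    using prod_alt_even[OF ev] sg by (simp add: power_add[symmetric])
  define c' where "c' i = (if i < M then c i else (-1)^n)" for i
  have sperm': "sig D permutes {0..<Suc M}" by (rule permutes_subset[OF sperm]) auto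
  have ss': "\<forall>i<Suc M. sig D (sig D i) = i" using ss by (auto simp: sig_def M_def less_Suc_eq)
  have rel2: "\<forall>i<Suc M. \<forall>j<Suc M. (deriv^^j) ((map (\<lambda>d. mu d h g) D @ [Pn n h g])!i) x
      = c' i * (-1)^j * (deriv^^j) ((map (\<lambda>d. mu d g h) D @ [Pn n g h])!(sig D i)) (-x)"
  proof (intro allI impI)
    fix i j assume i: "i < Suc M" and j: "j < Suc M"
    show "(deriv^^j) ((map (\<lambda>d. mu d h g) D @ [Pn n h g])!i) x
      = c' i * (-1)^j * (deriv^^j) ((map (\<lambda>d. mu d g h) D @ [Pn n g h])!(sig D i)) (-x)"
    proof (cases "i < M")
      case True
      then show ?thesis using mu_rel[OF x] sp[of i] by (simp add: M_def c_def c'_def nth_append)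
    next
      case False
      then have "i = M" using i by simp
      then show ?thesis using Pn_rel[OF x] by (simp add: M_def c'_def nth_append sig_def)
    qed
  qed
  have W2: "wronskian (map (\<lambda>d. mu d h g) D @ [Pn n h g]) x = (\<Prod>i<Suc M. c' i) * (\<Prod>j<Suc M. (-1::real)^j) * of_int (sign (sig D)) * wronskian (map (\<lambda>d. mu d g h) D @ [Pn n g h]) (-x)"
    by (rule wronskian_reflect[OF _ _ sperm' ss' rel2]) (simp_all add: M_def)
  have "(\<Prod>i<Suc M. c' i) = (-1)^n" using pc' by (simp add: c'_def)
  moreover have "(\<Prod>j<Suc M. (-1::real)^j) = (\<Prod>j<M. (-1::real)^j)" using ev by simp
  ultimately show ?thesis using W1 W2 one pc' by (simp add: mult_ac)
qed

lemma MI_MII: assumes "distinct D" "mirror_symmetric D" shows "MI D = MII D"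
proof -
  have cl: "\<forall>d. sw d \<in> set D \<longleftrightarrow> d \<in> set D"
  proof
    fix d :: seedlabel
    obtain v t where d: "d = (v,t)" by (cases d) auto
    show "sw d \<in> set D \<longleftrightarrow> d \<in> set D"
      using assms(2) unfolding mirror_symmetric_def d by (cases t) (auto simp: set_eq_iff)
  qed
  have snd_sw: "snd (sw d) = TII \<longleftrightarrow> snd d = TI" for d by (cases d rule: sw.cases) auto
  have img: "{x. snd x = TII} \<inter> set D = sw ` ({x. snd x = TI} \<inter> set D)"
  proof
    show "{x. snd x = TII} \<inter> set D \<subseteq> sw ` ({x. snd x = TI} \<inter> set D)"
    proof
      fix d assume d: "d \<in> {x. snd x = TII} \<inter> set D"
      then have "sw d \<in> {x. snd x = TI} \<inter> set D" using cl[rule_format, of d] snd_sw[of "sw d"] sw_props(1)[of d] by auto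
      then show "d \<in> sw ` ({x. snd x = TI} \<inter> set D)" using sw_props(1)[of d] by (metis image_eqI)
    qed
    show "sw ` ({x. snd x = TI} \<inter> set D) \<subseteq> {x. snd x = TII} \<inter> set D"
    proof
      fix e assume "e \<in> sw ` ({x. snd x = TI} \<inter> set D)"
      then obtain d where d: "e = sw d" "snd d = TI" "d \<in> set D" by auto
      have "sw d \<in> set D" using cl[rule_format, of d] d by simp
      moreover have "snd (sw d) = TII" using snd_sw[of d] d by simp
      ultimately show "e \<in> {x. snd x = TII} \<inter> set D" using d by simp
    qed
  qed
  have inj: "inj sw" by (metis injI sw_props(1))
  show ?thesis unfolding MI_def MII_def distinct_length_filter[OF assms(1)] img
    by (simp add: card_image inj_on_subset[OF inj])
qed

theorem mainTheorem7:
  fixes g h :: real and D :: "seedlabel list" and n :: nat and \<eta> :: real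
  assumes "g > 1/2" and "h > 1/2"
    and "distinct D"
    and "\<forall>d\<in>set D. valid_seed g h d \<and> valid_seed h g d"
    and "mirror_symmetric D"
    and "-1 < \<eta>" and "\<eta> < 1"
  shows "PD D n g h (- \<eta>) = (-1) ^ n * PD D n h g \<eta>
         \<and> Xi D g h (- \<eta>) = Xi D h g \<eta>"
proof -
  have x: "\<eta> \<in> Iv" using assms by auto
  note W = main_wron[OF assms(3) assms(5) x, of h g n]
  have m: "MI D = MII D" by (rule MI_MII[OF assms(3) assms(5)])
  have pm: "(-1::real)^n * (-1)^n = 1" by (simp add: power_add[symmetric])
  have "PD D n g h (- \<eta>) = (-1) ^ n * PD D n h g \<eta>"
    unfolding PD_def using W m pm by (simp add: mult_ac)
  moreover have "Xi D g h (- \<eta>) = Xi D h g \<eta>"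
    unfolding Xi_def using W m by (simp add: mult_ac)
  ultimately show ?thesis ..
qed

end
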